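(* In every proper $4$-colouring of $K$ in which none of the $26$ copies of $H$ in $K$ contains a monochromatic triple, both $J$ and $R(J)$ have their linking vertices coloured according to option (c). In particular, all six linking diagonals are monochromatic, namely $\{L_k,L_{k+3}\}$ and $\{R(L_k),R(L_{k+3})\}$ for $k=0,1,2$.
   Context: Identify $\mathbb{R}^2$ with $\mathbb{C}$. Let $\Lambda=\{a+b e^{i\pi/3}: a,b\in\mathbb{Z}\}$. For $c\in\mathbb{C}$, let $H_c$ be the unit-distance graph on $c$ and $c+e^{i\pi k/3}$, $k=0,\dots,5$. A monochromatic triple in a colouring of a copy of $H$ is a set of three of its $7$ vertices all receiving the same colour. $J$ is the unit-distance graph on the $31$ points of $\Lambda$ of modulus at most $\sqrt7$. It is the union of the $13$ copies $H_c$, $c\in\Lambda$, $|c|\le\sqrt3$. The linking vertices of $J$ are $L_k=2e^{i\pi k/3}$ for $k\in\mathbb{Z}/6$, and a linking diagonal is a pair $\{L_k,L_{k+3}\}$. Given a colouring in which $0$ has colour $\gamma$, the linking vertices are coloured according to option (c) if there is some $k$ such that $L_k$ and $L_{k+3}$ have colour $\gamma$ and the other four linking vertices share a common colour different from $\gamma$. The same notion applies to any rotated copy of $J$ about $0$, using the images of the $L_k$. Let $R$ be the clockwise rotation about $0$ by the angle $2\arcsin(1/4)$; then $|L_k-R(L_k)|=1$. $K$ is the unit-distance graph on the $61$ points of $V(J)\cup R(V(J))$. Its $26$ copies of $H$ are the $H_c$ and the $R(H_c)$ for $c\in\Lambda$, $|c|\le\sqrt3$. *)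

theory Defs
  imports Complex_Main
begin

definition omega :: complex where "omega = cis (pi / 3)"

definition Lambda :: "complex set" where
  "Lambda = {of_int a + of_int b * omega | a b. True}"

definition Hverts :: "complex \<Rightarrow> complex set" where
  "Hverts c = insert c {c + omega ^ k | k. k < (6::nat)}"

definition VJ :: "complex set" where
  "VJ = {z \<in> Lambda. cmod z \<le> sqrt 7}"

text \<open>Centres of the 13 copies of H in J\<close>
definition centres :: "complex set" where
  "centres = {c \<in> Lambda. cmod c \<le> sqrt 3}"

definition Lk :: "nat \<Rightarrow> complex" where
  "Lk k = 2 * omega ^ k"

definition Rot :: "complex \<Rightarrow> complex" where
  "Rot z = cis (- (2 * arcsin (1/4))) * z"

definition VK :: "complex set" where
  "VK = VJ \<union> Rot ` VJ"

definition Hcopies :: "complex set set" where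
  "Hcopies = Hverts ` centres \<union> (\<lambda>c. Rot ` Hverts c) ` centres"

definition proper_4_colouring :: "complex set \<Rightarrow> (complex \<Rightarrow> nat) \<Rightarrow> bool" where
  "proper_4_colouring V f \<longleftrightarrow>
     (\<forall>z\<in>V. f z < 4) \<and> (\<forall>z\<in>V. \<forall>w\<in>V. cmod (z - w) = 1 \<longrightarrow> f z \<noteq> f w)"

definition has_mono_triple :: "(complex \<Rightarrow> nat) \<Rightarrow> complex set \<Rightarrow> bool" where
  "has_mono_triple f S \<longleftrightarrow>
     (\<exists>T\<subseteq>S. card T = 3 \<and> (\<exists>col. \<forall>z\<in>T. f z = col))"

text \<open>Option (c) for the copy of J given by the map g (identity or Rot) applied to
  the linking vertices; gamma is the colour of 0\<close>
definition option_c :: "(complex \<Rightarrow> nat) \<Rightarrow> (complex \<Rightarrow> complex) \<Rightarrow> bool" where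
  "option_c f g \<longleftrightarrow>
     (\<exists>k<6. f (g (Lk k)) = f 0 \<and> f (g (Lk (k + 3))) = f 0 \<and>
        (\<exists>\<delta>. \<delta> \<noteq> f 0 \<and> (\<forall>j<6. j mod 3 \<noteq> k mod 3 \<longrightarrow> f (g (Lk j)) = \<delta>)))"

end

theory Submission
  imports Defs
begin


definition P :: "int \<Rightarrow> int \<Rightarrow> complex" where
  "P a b = of_int a + of_int b * omega"

definition norm2 :: "int \<Rightarrow> int \<Rightarrow> int" where
  "norm2 a b = a*a + a*b + b*b"

lemma omega_eq: "omega = Complex (1/2) (sqrt 3 / 2)"
  by (simp add: omega_def complex_eq_iff cos_60 sin_60)

lemma Re_P: "Re (P a b) = of_int a + of_int b / 2"
  by (simp add: P_def omega_eq)
lemma Im_P: "Im (P a b) = of_int b * sqrt 3 / 2"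
  by (simp add: P_def omega_eq)

lemma cmod_P2: "(cmod (P a b))^2 = of_int (norm2 a b)"
proof -
  have s: "(sqrt 3)^2 = 3" by simp
  have "(cmod (P a b))^2 = (of_int a + of_int b / 2)^2 + (of_int b * sqrt 3 / 2)^2"
    by (simp add: cmod_power2 Re_P Im_P)
  also have "\<dots> = of_int a ^2 + of_int a * of_int b + of_int b ^2 * ((sqrt 3)^2 + 1) / 4"
    by (simp add: power2_eq_square field_simps)
  also have "\<dots> = of_int (norm2 a b)" unfolding s by (simp add: norm2_def power2_eq_square)
  finally show ?thesis .
qed

lemma P_diff: "P a b - P c d = P (a - c) (b - d)"
  by (simp add: P_def algebra_simps)
lemma P_add: "P a b + P c d = P (a + c) (b + d)"
  by (simp add: P_def algebra_simps)

lemma P_inj: "P a b = P c d \<Longrightarrow> a = c \<and> b = d"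
proof -
  assume e: "P a b = P c d"
  hence "Im (P a b) = Im (P c d)" by simp
  hence bd: "b = d" by (simp add: Im_P)
  from e have "Re (P a b) = Re (P c d)" by simp
  with bd show ?thesis by (simp add: Re_P)
qed

lemma cmod_P_le: "norm2 a b \<le> n \<Longrightarrow> cmod (P a b) \<le> sqrt (of_int n)"
proof -
  assume "norm2 a b \<le> n"
  hence "(cmod (P a b))^2 \<le> of_int n" by (simp add: cmod_P2)
  thus ?thesis by (simp add: real_le_rsqrt)
qed

lemma P_Lambda: "P a b \<in> Lambda"
  by (auto simp: Lambda_def P_def)

lemma P_VJ: "norm2 a b \<le> 7 \<Longrightarrow> P a b \<in> VJ"
  using cmod_P_le[of a b 7] by (simp add: VJ_def P_Lambda)

lemma P_centres: "norm2 a b \<le> 3 \<Longrightarrow> P a b \<in> centres"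
  using cmod_P_le[of a b 3] by (simp add: centres_def P_Lambda)

lemma P_dist1: "norm2 (a - c) (b - d) = 1 \<Longrightarrow> cmod (P a b - P c d) = 1"
proof -
  assume "norm2 (a - c) (b - d) = 1"
  hence "(cmod (P a b - P c d))^2 = 1" by (simp add: P_diff cmod_P2)
  hence "cmod (P a b - P c d) = 1 \<or> cmod (P a b - P c d) = - 1" by (simp add: power2_eq_1_iff)
  thus ?thesis using norm_ge_zero[of "P a b - P c d"] by linarith
qed

lemma omega2: "omega^2 = omega - 1"
proof -
  have s: "sqrt 3 * sqrt 3 = 3" by simp
  show ?thesis by (simp add: omega_eq complex_eq_iff power2_eq_square s)
qed
lemma omega3: "omega^3 = -1"
proof -
  have "omega^3 = omega * omega^2" by (simp add: power3_eq_cube power2_eq_square)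
  also have "\<dots> = omega^2 - omega" unfolding omega2 by (simp add: algebra_simps omega2[unfolded power2_eq_square])
  finally show ?thesis by (simp add: omega2)
qed

lemma omega_pows:
  "omega^0 = P 1 0" "omega^1 = P 0 1" "omega^2 = P (-1) 1"
  "omega^3 = P (-1) 0" "omega^4 = P 0 (-1)" "omega^5 = P 1 (-1)"
proof -
  have o4: "omega^4 = omega^3 * omega" by (simp add: power_Suc2[symmetric])
  have o5: "omega^5 = omega^3 * omega^2" by (simp add: power_add[symmetric])
  show "omega^0 = P 1 0" "omega^1 = P 0 1" "omega^2 = P (-1) 1"
    "omega^3 = P (-1) 0" "omega^4 = P 0 (-1)" "omega^5 = P 1 (-1)"
    by (simp_all add: P_def omega2 omega3 o4 o5)
qed

lemma Hv: "k < 6 \<Longrightarrow> c + omega^k \<in> Hverts c"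
  by (auto simp: Hverts_def)

lemma Hv_P:
  "P (a+1) b \<in> Hverts (P a b)" "P a (b+1) \<in> Hverts (P a b)"
  "P (a-1) (b+1) \<in> Hverts (P a b)" "P (a-1) b \<in> Hverts (P a b)"
  "P a (b-1) \<in> Hverts (P a b)" "P (a+1) (b-1) \<in> Hverts (P a b)"
  using Hv[of 0 "P a b", unfolded omega_pows] Hv[of 1 "P a b", unfolded omega_pows]
    Hv[of 2 "P a b", unfolded omega_pows] Hv[of 3 "P a b", unfolded omega_pows]
    Hv[of 4 "P a b", unfolded omega_pows] Hv[of 5 "P a b", unfolded omega_pows]
  by (simp_all add: omega_pows P_add)

lemma Lk_P:
  "Lk 0 = P 2 0" "Lk 1 = P 0 2" "Lk 2 = P (-2) 2"
  "Lk 3 = P (-2) 0" "Lk 4 = P 0 (-2)" "Lk 5 = P 2 (-2)"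
  by (simp_all only: Lk_def omega_pows) (simp_all add: P_def)

lemma P00: "P 0 0 = 0" by (simp add: P_def)

lemma Rot_dist: "cmod (Rot z - Rot w) = cmod (z - w)"
proof -
  have "Rot z - Rot w = cis (- (2 * arcsin (1/4))) * (z - w)" by (simp add: Rot_def algebra_simps)
  thus ?thesis by (simp add: norm_mult)
qed

lemma Rot_inj: "Rot z = Rot w \<Longrightarrow> z = w"
  by (simp add: Rot_def)

lemma Rot0: "Rot 0 = 0" by (simp add: Rot_def)

lemma cmod_omega: "cmod omega = 1" by (simp add: omega_def)

lemma cross: "cmod (Lk k - Rot (Lk k)) = 1"
proof -
  define t where "t = 2 * arcsin (1/4::real)"
  have c: "cos t = 7/8" unfolding t_def cos_double_sin by (simp add: power2_eq_square)
  have "Lk k - Rot (Lk k) = Lk k * (1 - cis (- t))" by (simp add: Rot_def t_def algebra_simps)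
  hence "cmod (Lk k - Rot (Lk k)) = 2 * cmod (1 - cis (-t))"
    by (simp add: norm_mult Lk_def norm_power cmod_omega)
  moreover have "(cmod (1 - cis (-t)))^2 = 1/4"
  proof -
    have "(cmod (1 - cis (-t)))^2 = (1 - cos t)^2 + (sin t)^2" by (simp add: cmod_power2)
    also have "\<dots> = 2 - 2 * cos t" using sin_cos_squared_add[of t] by (simp add: power2_eq_square algebra_simps)
    finally show ?thesis using c by simp
  qed
  hence "cmod (1 - cis (-t)) = 1/2"
    by (metis norm_ge_zero power_divide power_one real_sqrt_abs real_sqrt_four real_sqrt_one abs_of_nonneg real_sqrt_divide)
  ultimately show ?thesis by simp
qed

lemma tri_lemma:
  assumes "\<not> has_mono_triple f S" "x\<in>S" "y\<in>S" "z\<in>S" "x\<noteq>y" "y\<noteq>z" "x\<noteq>z"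
  shows "\<not>(f x = f y \<and> f y = f z)"
proof
  assume h: "f x = f y \<and> f y = f z"
  have "{x,y,z} \<subseteq> S" "card {x,y,z} = 3" using assms by auto
  moreover have "\<forall>w\<in>{x,y,z}. f w = f x" using h by auto
  ultimately have "has_mono_triple f S" unfolding has_mono_triple_def by blast
  with assms(1) show False by simp
qed

lemma lt4D: "(n::nat) < 4 \<Longrightarrow> n = 0 \<or> n = 1 \<or> n = 2 \<or> n = 3" by arith
lemma amoD: "(n::nat) < 4 \<Longrightarrow> \<not>(n=0\<and>n=1) \<and> \<not>(n=0\<and>n=2) \<and> \<not>(n=0\<and>n=3) \<and> \<not>(n=1\<and>n=2) \<and> \<not>(n=1\<and>n=3) \<and> \<not>(n=2\<and>n=3)" by arith
lemma neD: "(a::nat) \<noteq> b \<Longrightarrow> \<not>(a=0\<and>b=0) \<and> \<not>(a=1\<and>b=1) \<and> \<not>(a=2\<and>b=2) \<and> \<not>(a=3\<and>b=3)" by auto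
lemma triD: "\<not>((a::nat) = b \<and> b = c) \<Longrightarrow> \<not>(a=0\<and>b=0\<and>c=0) \<and> \<not>(a=1\<and>b=1\<and>c=1) \<and> \<not>(a=2\<and>b=2\<and>c=2) \<and> \<not>(a=3\<and>b=3\<and>c=3)" by auto
lemma eqC: "(a::nat) < 4 \<Longrightarrow> b < 4 \<Longrightarrow> (a = b) = ((a=0\<and>b=0)\<or>(a=1\<and>b=1)\<or>(a=2\<and>b=2)\<or>(a=3\<and>b=3))" by arith

lemma J_explicit:
  fixes h :: "int \<Rightarrow> int \<Rightarrow> nat"
  assumes R: "\<And>a b. norm2 a b \<le> 7 \<Longrightarrow> h a b < 4"
    and E: "\<And>a b c d. norm2 a b \<le> 7 \<Longrightarrow> norm2 c d \<le> 7 \<Longrightarrow> norm2 (a-c) (b-d) = 1 \<Longrightarrow> h a b \<noteq> h c d"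
    and T1: "\<And>a b. norm2 a b \<le> 3 \<Longrightarrow> \<not>(h (a+1) b = h (a-1) (b+1) \<and> h (a-1) (b+1) = h a (b-1))"
    and T2: "\<And>a b. norm2 a b \<le> 3 \<Longrightarrow> \<not>(h a (b+1) = h (a-1) b \<and> h (a-1) b = h (a+1) (b-1))"
  shows "(h 2 0 = h 0 0 \<and> h (- 2) 0 = h 0 0 \<and> h 0 2 = h (- 2) 2 \<and> h 0 2 = h 0 (- 2) \<and> h 0 2 = h 2 (- 2) \<and> h 0 2 \<noteq> h 0 0) \<or> (h 0 2 = h 0 0 \<and> h 0 (- 2) = h 0 0 \<and> h (- 2) 2 = h (- 2) 0 \<and> h (- 2) 2 = h 2 (- 2) \<and> h (- 2) 2 = h 2 0 \<and> h (- 2) 2 \<noteq> h 0 0) \<or> (h (- 2) 2 = h 0 0 \<and> h 2 (- 2) = h 0 0 \<and> h (- 2) 0 = h 0 (- 2) \<and> h (- 2) 0 = h 2 0 \<and> h (- 2) 0 = h 0 2 \<and> h (- 2) 0 \<noteq> h 0 0) \<or> (h (- 2) 2 = h 0 0 \<and> h (- 2) 0 = h 0 0 \<and> h 0 (- 2) = h 0 0 \<and> h 2 (- 2) = h 0 0) \<or> (h 2 0 = h 0 0 \<and> h (- 2) 0 = h 0 0 \<and> h 0 (- 2) = h 0 0 \<and> h 2 (- 2) = h 0 0) \<or> (h 2 0 = h 0 0 \<and> h 0 2 = h 0 0 \<and> h 0 (- 2) = h 0 0 \<and> h 2 (- 2) = h 0 0) \<or> (h 2 0 = h 0 0 \<and>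 h 0 2 = h 0 0 \<and> h (- 2) 2 = h 0 0 \<and> h 2 (- 2) = h 0 0) \<or> (h 2 0 = h 0 0 \<and> h 0 2 = h 0 0 \<and> h (- 2) 2 = h 0 0 \<and> h (- 2) 0 = h 0 0) \<or> (h 0 2 = h 0 0 \<and> h (- 2) 2 = h 0 0 \<and> h (- 2) 0 = h 0 0 \<and> h 0 (- 2) = h 0 0)"
proof -
  have r0: "h (- 3) 1 < 4" by (rule R) (simp add: norm2_def)
  have r1: "h (- 3) 2 < 4" by (rule R) (simp add: norm2_def)
  have r2: "h (- 2) (- 1) < 4" by (rule R) (simp add: norm2_def)
  have r3: "h (- 2) 0 < 4" by (rule R) (simp add: norm2_def)
  have r4: "h (- 2) 1 < 4" by (rule R) (simp add: norm2_def)
  have r5: "h (- 2) 2 < 4" by (rule R) (simp add: norm2_def)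
  have r6: "h (- 2) 3 < 4" by (rule R) (simp add: norm2_def)
  have r7: "h (- 1) (- 2) < 4" by (rule R) (simp add: norm2_def)
  have r8: "h (- 1) (- 1) < 4" by (rule R) (simp add: norm2_def)
  have r9: "h (- 1) 0 < 4" by (rule R) (simp add: norm2_def)
  have r10: "h (- 1) 1 < 4" by (rule R) (simp add: norm2_def)
  have r11: "h (- 1) 2 < 4" by (rule R) (simp add: norm2_def)
  have r12: "h (- 1) 3 < 4" by (rule R) (simp add: norm2_def)
  have r13: "h 0 (- 2) < 4" by (rule R) (simp add: norm2_def)
  have r14: "h 0 (- 1) < 4" by (rule R) (simp add: norm2_def)
  have r15: "h 0 0 < 4" by (rule R) (simp add: norm2_def)
  have r16: "h 0 1 < 4" by (rule R) (simp add: norm2_def)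
  have r17: "h 0 2 < 4" by (rule R) (simp add: norm2_def)
  have r18: "h 1 (- 3) < 4" by (rule R) (simp add: norm2_def)
  have r19: "h 1 (- 2) < 4" by (rule R) (simp add: norm2_def)
  have r20: "h 1 (- 1) < 4" by (rule R) (simp add: norm2_def)
  have r21: "h 1 0 < 4" by (rule R) (simp add: norm2_def)
  have r22: "h 1 1 < 4" by (rule R) (simp add: norm2_def)
  have r23: "h 1 2 < 4" by (rule R) (simp add: norm2_def)
  have r24: "h 2 (- 3) < 4" by (rule R) (simp add: norm2_def)
  have r25: "h 2 (- 2) < 4" by (rule R) (simp add: norm2_def)
  have r26: "h 2 (- 1) < 4" by (rule R) (simp add: norm2_def)
  have r27: "h 2 0 < 4" by (rule R) (simp add: norm2_def)
  have r28: "h 2 1 < 4" by (rule R) (simp add: norm2_def)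
  have r29: "h 3 (- 2) < 4" by (rule R) (simp add: norm2_def)
  have r30: "h 3 (- 1) < 4" by (rule R) (simp add: norm2_def)
  have e0: "h (- 3) 1 \<noteq> h (- 3) 2" by (rule E) (simp_all add: norm2_def)
  have e1: "h (- 3) 1 \<noteq> h (- 2) 0" by (rule E) (simp_all add: norm2_def)
  have e2: "h (- 3) 1 \<noteq> h (- 2) 1" by (rule E) (simp_all add: norm2_def)
  have e3: "h (- 3) 2 \<noteq> h (- 2) 1" by (rule E) (simp_all add: norm2_def)
  have e4: "h (- 3) 2 \<noteq> h (- 2) 2" by (rule E) (simp_all add: norm2_def)
  have e5: "h (- 2) (- 1) \<noteq> h (- 2) 0" by (rule E) (simp_all add: norm2_def)
  have e6: "h (- 2) (- 1) \<noteq> h (- 1) (- 2)" by (rule E) (simp_all add: norm2_def)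
  have e7: "h (- 2) (- 1) \<noteq> h (- 1) (- 1)" by (rule E) (simp_all add: norm2_def)
  have e8: "h (- 2) 0 \<noteq> h (- 2) 1" by (rule E) (simp_all add: norm2_def)
  have e9: "h (- 2) 0 \<noteq> h (- 1) (- 1)" by (rule E) (simp_all add: norm2_def)
  have e10: "h (- 2) 0 \<noteq> h (- 1) 0" by (rule E) (simp_all add: norm2_def)
  have e11: "h (- 2) 1 \<noteq> h (- 2) 2" by (rule E) (simp_all add: norm2_def)
  have e12: "h (- 2) 1 \<noteq> h (- 1) 0" by (rule E) (simp_all add: norm2_def)
  have e13: "h (- 2) 1 \<noteq> h (- 1) 1" by (rule E) (simp_all add: norm2_def)
  have e14: "h (- 2) 2 \<noteq> h (- 2) 3" by (rule E) (simp_all add: norm2_def)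
  have e15: "h (- 2) 2 \<noteq> h (- 1) 1" by (rule E) (simp_all add: norm2_def)
  have e16: "h (- 2) 2 \<noteq> h (- 1) 2" by (rule E) (simp_all add: norm2_def)
  have e17: "h (- 2) 3 \<noteq> h (- 1) 2" by (rule E) (simp_all add: norm2_def)
  have e18: "h (- 2) 3 \<noteq> h (- 1) 3" by (rule E) (simp_all add: norm2_def)
  have e19: "h (- 1) (- 2) \<noteq> h (- 1) (- 1)" by (rule E) (simp_all add: norm2_def)
  have e20: "h (- 1) (- 2) \<noteq> h 0 (- 2)" by (rule E) (simp_all add: norm2_def)
  have e21: "h (- 1) (- 1) \<noteq> h (- 1) 0" by (rule E) (simp_all add: norm2_def)
  have e22: "h (- 1) (- 1) \<noteq> h 0 (- 2)" by (rule E) (simp_all add: norm2_def)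
  have e23: "h (- 1) (- 1) \<noteq> h 0 (- 1)" by (rule E) (simp_all add: norm2_def)
  have e24: "h (- 1) 0 \<noteq> h (- 1) 1" by (rule E) (simp_all add: norm2_def)
  have e25: "h (- 1) 0 \<noteq> h 0 (- 1)" by (rule E) (simp_all add: norm2_def)
  have e26: "h (- 1) 0 \<noteq> h 0 0" by (rule E) (simp_all add: norm2_def)
  have e27: "h (- 1) 1 \<noteq> h (- 1) 2" by (rule E) (simp_all add: norm2_def)
  have e28: "h (- 1) 1 \<noteq> h 0 0" by (rule E) (simp_all add: norm2_def)
  have e29: "h (- 1) 1 \<noteq> h 0 1" by (rule E) (simp_all add: norm2_def)
  have e30: "h (- 1) 2 \<noteq> h (- 1) 3" by (rule E) (simp_all add: norm2_def)
  have e31: "h (- 1) 2 \<noteq> h 0 1" by (rule E) (simp_all add: norm2_def)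
  have e32: "h (- 1) 2 \<noteq> h 0 2" by (rule E) (simp_all add: norm2_def)
  have e33: "h (- 1) 3 \<noteq> h 0 2" by (rule E) (simp_all add: norm2_def)
  have e34: "h 0 (- 2) \<noteq> h 0 (- 1)" by (rule E) (simp_all add: norm2_def)
  have e35: "h 0 (- 2) \<noteq> h 1 (- 3)" by (rule E) (simp_all add: norm2_def)
  have e36: "h 0 (- 2) \<noteq> h 1 (- 2)" by (rule E) (simp_all add: norm2_def)
  have e37: "h 0 (- 1) \<noteq> h 0 0" by (rule E) (simp_all add: norm2_def)
  have e38: "h 0 (- 1) \<noteq> h 1 (- 2)" by (rule E) (simp_all add: norm2_def)
  have e39: "h 0 (- 1) \<noteq> h 1 (- 1)" by (rule E) (simp_all add: norm2_def)
  have e40: "h 0 0 \<noteq> h 0 1" by (rule E) (simp_all add: norm2_def)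
  have e41: "h 0 0 \<noteq> h 1 (- 1)" by (rule E) (simp_all add: norm2_def)
  have e42: "h 0 0 \<noteq> h 1 0" by (rule E) (simp_all add: norm2_def)
  have e43: "h 0 1 \<noteq> h 0 2" by (rule E) (simp_all add: norm2_def)
  have e44: "h 0 1 \<noteq> h 1 0" by (rule E) (simp_all add: norm2_def)
  have e45: "h 0 1 \<noteq> h 1 1" by (rule E) (simp_all add: norm2_def)
  have e46: "h 0 2 \<noteq> h 1 1" by (rule E) (simp_all add: norm2_def)
  have e47: "h 0 2 \<noteq> h 1 2" by (rule E) (simp_all add: norm2_def)
  have e48: "h 1 (- 3) \<noteq> h 1 (- 2)" by (rule E) (simp_all add: norm2_def)
  have e49: "h 1 (- 3) \<noteq> h 2 (- 3)" by (rule E) (simp_all add: norm2_def)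
  have e50: "h 1 (- 2) \<noteq> h 1 (- 1)" by (rule E) (simp_all add: norm2_def)
  have e51: "h 1 (- 2) \<noteq> h 2 (- 3)" by (rule E) (simp_all add: norm2_def)
  have e52: "h 1 (- 2) \<noteq> h 2 (- 2)" by (rule E) (simp_all add: norm2_def)
  have e53: "h 1 (- 1) \<noteq> h 1 0" by (rule E) (simp_all add: norm2_def)
  have e54: "h 1 (- 1) \<noteq> h 2 (- 2)" by (rule E) (simp_all add: norm2_def)
  have e55: "h 1 (- 1) \<noteq> h 2 (- 1)" by (rule E) (simp_all add: norm2_def)
  have e56: "h 1 0 \<noteq> h 1 1" by (rule E) (simp_all add: norm2_def)
  have e57: "h 1 0 \<noteq> h 2 (- 1)" by (rule E) (simp_all add: norm2_def)
  have e58: "h 1 0 \<noteq> h 2 0" by (rule E) (simp_all add: norm2_def)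
  have e59: "h 1 1 \<noteq> h 1 2" by (rule E) (simp_all add: norm2_def)
  have e60: "h 1 1 \<noteq> h 2 0" by (rule E) (simp_all add: norm2_def)
  have e61: "h 1 1 \<noteq> h 2 1" by (rule E) (simp_all add: norm2_def)
  have e62: "h 1 2 \<noteq> h 2 1" by (rule E) (simp_all add: norm2_def)
  have e63: "h 2 (- 3) \<noteq> h 2 (- 2)" by (rule E) (simp_all add: norm2_def)
  have e64: "h 2 (- 2) \<noteq> h 2 (- 1)" by (rule E) (simp_all add: norm2_def)
  have e65: "h 2 (- 2) \<noteq> h 3 (- 2)" by (rule E) (simp_all add: norm2_def)
  have e66: "h 2 (- 1) \<noteq> h 2 0" by (rule E) (simp_all add: norm2_def)
  have e67: "h 2 (- 1) \<noteq> h 3 (- 2)" by (rule E) (simp_all add: norm2_def)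
  have e68: "h 2 (- 1) \<noteq> h 3 (- 1)" by (rule E) (simp_all add: norm2_def)
  have e69: "h 2 0 \<noteq> h 2 1" by (rule E) (simp_all add: norm2_def)
  have e70: "h 2 0 \<noteq> h 3 (- 1)" by (rule E) (simp_all add: norm2_def)
  have e71: "h 3 (- 2) \<noteq> h 3 (- 1)" by (rule E) (simp_all add: norm2_def)
  have t0: "\<not>(h (- 1) 1 = h (- 3) 2 \<and> h (- 3) 2 = h (- 2) 0)" using T1[of "(- 2)" "1"] by (simp add: norm2_def)
  have t1: "\<not>(h (- 2) 2 = h (- 3) 1 \<and> h (- 3) 1 = h (- 1) 0)" using T2[of "(- 2)" "1"] by (simp add: norm2_def)
  have t2: "\<not>(h 0 (- 1) = h (- 2) 0 \<and> h (- 2) 0 = h (- 1) (- 2))" using T1[of "(- 1)" "(- 1)"] by (simp add: norm2_def)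
  have t3: "\<not>(h (- 1) 0 = h (- 2) (- 1) \<and> h (- 2) (- 1) = h 0 (- 2))" using T2[of "(- 1)" "(- 1)"] by (simp add: norm2_def)
  have t4: "\<not>(h 0 0 = h (- 2) 1 \<and> h (- 2) 1 = h (- 1) (- 1))" using T1[of "(- 1)" "0"] by (simp add: norm2_def)
  have t5: "\<not>(h (- 1) 1 = h (- 2) 0 \<and> h (- 2) 0 = h 0 (- 1))" using T2[of "(- 1)" "0"] by (simp add: norm2_def)
  have t6: "\<not>(h 0 1 = h (- 2) 2 \<and> h (- 2) 2 = h (- 1) 0)" using T1[of "(- 1)" "1"] by (simp add: norm2_def)
  have t7: "\<not>(h (- 1) 2 = h (- 2) 1 \<and> h (- 2) 1 = h 0 0)" using T2[of "(- 1)" "1"] by (simp add: norm2_def)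
  have t8: "\<not>(h 0 2 = h (- 2) 3 \<and> h (- 2) 3 = h (- 1) 1)" using T1[of "(- 1)" "2"] by (simp add: norm2_def)
  have t9: "\<not>(h (- 1) 3 = h (- 2) 2 \<and> h (- 2) 2 = h 0 1)" using T2[of "(- 1)" "2"] by (simp add: norm2_def)
  have t10: "\<not>(h 1 (- 1) = h (- 1) 0 \<and> h (- 1) 0 = h 0 (- 2))" using T1[of "0" "(- 1)"] by (simp add: norm2_def)
  have t11: "\<not>(h 0 0 = h (- 1) (- 1) \<and> h (- 1) (- 1) = h 1 (- 2))" using T2[of "0" "(- 1)"] by (simp add: norm2_def)
  have t12: "\<not>(h 1 0 = h (- 1) 1 \<and> h (- 1) 1 = h 0 (- 1))" using T1[of "0" "0"] by (simp add: norm2_def)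
  have t13: "\<not>(h 0 1 = h (- 1) 0 \<and> h (- 1) 0 = h 1 (- 1))" using T2[of "0" "0"] by (simp add: norm2_def)
  have t14: "\<not>(h 1 1 = h (- 1) 2 \<and> h (- 1) 2 = h 0 0)" using T1[of "0" "1"] by (simp add: norm2_def)
  have t15: "\<not>(h 0 2 = h (- 1) 1 \<and> h (- 1) 1 = h 1 0)" using T2[of "0" "1"] by (simp add: norm2_def)
  have t16: "\<not>(h 2 (- 2) = h 0 (- 1) \<and> h 0 (- 1) = h 1 (- 3))" using T1[of "1" "(- 2)"] by (simp add: norm2_def)
  have t17: "\<not>(h 1 (- 1) = h 0 (- 2) \<and> h 0 (- 2) = h 2 (- 3))" using T2[of "1" "(- 2)"] by (simp add: norm2_def)
  have t18: "\<not>(h 2 (- 1) = h 0 0 \<and> h 0 0 = h 1 (- 2))" using T1[of "1" "(- 1)"] by (simp add: norm2_def)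
  have t19: "\<not>(h 1 0 = h 0 (- 1) \<and> h 0 (- 1) = h 2 (- 2))" using T2[of "1" "(- 1)"] by (simp add: norm2_def)
  have t20: "\<not>(h 2 0 = h 0 1 \<and> h 0 1 = h 1 (- 1))" using T1[of "1" "0"] by (simp add: norm2_def)
  have t21: "\<not>(h 1 1 = h 0 0 \<and> h 0 0 = h 2 (- 1))" using T2[of "1" "0"] by (simp add: norm2_def)
  have t22: "\<not>(h 2 1 = h 0 2 \<and> h 0 2 = h 1 0)" using T1[of "1" "1"] by (simp add: norm2_def)
  have t23: "\<not>(h 1 2 = h 0 1 \<and> h 0 1 = h 2 0)" using T2[of "1" "1"] by (simp add: norm2_def)
  have t24: "\<not>(h 3 (- 1) = h 1 0 \<and> h 1 0 = h 2 (- 2))" using T1[of "2" "(- 1)"] by (simp add: norm2_def)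
  have t25: "\<not>(h 2 0 = h 1 (- 1) \<and> h 1 (- 1) = h 3 (- 2))" using T2[of "2" "(- 1)"] by (simp add: norm2_def)
  show ?thesis using
    lt4D[OF r0]
    lt4D[OF r1]
    lt4D[OF r2]
    lt4D[OF r3]
    lt4D[OF r4]
    lt4D[OF r5]
    lt4D[OF r6]
    lt4D[OF r7]
    lt4D[OF r8]
    lt4D[OF r9]
    lt4D[OF r10]
    lt4D[OF r11]
    lt4D[OF r12]
    lt4D[OF r13]
    lt4D[OF r14]
    lt4D[OF r15]
    lt4D[OF r16]
    lt4D[OF r17]
    lt4D[OF r18]
    lt4D[OF r19]
    lt4D[OF r20]
    lt4D[OF r21]
    lt4D[OF r22]
    lt4D[OF r23]
    lt4D[OF r24]
    lt4D[OF r25]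
    lt4D[OF r26]
    lt4D[OF r27]
    lt4D[OF r28]
    lt4D[OF r29]
    lt4D[OF r30]
    amoD[OF r0]
    amoD[OF r1]
    amoD[OF r2]
    amoD[OF r3]
    amoD[OF r4]
    amoD[OF r5]
    amoD[OF r6]
    amoD[OF r7]
    amoD[OF r8]
    amoD[OF r9]
    amoD[OF r10]
    amoD[OF r11]
    amoD[OF r12]
    amoD[OF r13]
    amoD[OF r14]
    amoD[OF r15]
    amoD[OF r16]
    amoD[OF r17]
    amoD[OF r18]
    amoD[OF r19]
    amoD[OF r20]
    amoD[OF r21]
    amoD[OF r22]
    amoD[OF r23]
    amoD[OF r24]
    amoD[OF r25]
    amoD[OF r26]
    amoD[OF r27]
    amoD[OF r28]
    amoD[OF r29]
    amoD[OF r30]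
    neD[OF e0]
    neD[OF e1]
    neD[OF e2]
    neD[OF e3]
    neD[OF e4]
    neD[OF e5]
    neD[OF e6]
    neD[OF e7]
    neD[OF e8]
    neD[OF e9]
    neD[OF e10]
    neD[OF e11]
    neD[OF e12]
    neD[OF e13]
    neD[OF e14]
    neD[OF e15]
    neD[OF e16]
    neD[OF e17]
    neD[OF e18]
    neD[OF e19]
    neD[OF e20]
    neD[OF e21]
    neD[OF e22]
    neD[OF e23]
    neD[OF e24]
    neD[OF e25]
    neD[OF e26]
    neD[OF e27]
    neD[OF e28]
    neD[OF e29]
    neD[OF e30]
    neD[OF e31]
    neD[OF e32]
    neD[OF e33]
    neD[OF e34]
    neD[OF e35]
    neD[OF e36]
    neD[OF e37]
    neD[OF e38]
    neD[OF e39]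
    neD[OF e40]
    neD[OF e41]
    neD[OF e42]
    neD[OF e43]
    neD[OF e44]
    neD[OF e45]
    neD[OF e46]
    neD[OF e47]
    neD[OF e48]
    neD[OF e49]
    neD[OF e50]
    neD[OF e51]
    neD[OF e52]
    neD[OF e53]
    neD[OF e54]
    neD[OF e55]
    neD[OF e56]
    neD[OF e57]
    neD[OF e58]
    neD[OF e59]
    neD[OF e60]
    neD[OF e61]
    neD[OF e62]
    neD[OF e63]
    neD[OF e64]
    neD[OF e65]
    neD[OF e66]
    neD[OF e67]
    neD[OF e68]
    neD[OF e69]
    neD[OF e70]
    neD[OF e71]
    triD[OF t0]
    triD[OF t1]
    triD[OF t2]
    triD[OF t3]
    triD[OF t4]
    triD[OF t5]
    triD[OF t6]
    triD[OF t7]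
    triD[OF t8]
    triD[OF t9]
    triD[OF t10]
    triD[OF t11]
    triD[OF t12]
    triD[OF t13]
    triD[OF t14]
    triD[OF t15]
    triD[OF t16]
    triD[OF t17]
    triD[OF t18]
    triD[OF t19]
    triD[OF t20]
    triD[OF t21]
    triD[OF t22]
    triD[OF t23]
    triD[OF t24]
    triD[OF t25]
    eqC[OF r27 r17]
    eqC[OF r27 r5]
    eqC[OF r27 r3]
    eqC[OF r27 r13]
    eqC[OF r27 r25]
    eqC[OF r27 r15]
    eqC[OF r17 r27]
    eqC[OF r17 r5]
    eqC[OF r17 r3]
    eqC[OF r17 r13]
    eqC[OF r17 r25]
    eqC[OF r17 r15]
    eqC[OF r5 r27]
    eqC[OF r5 r17]
    eqC[OF r5 r3]
    eqC[OF r5 r13]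
    eqC[OF r5 r25]
    eqC[OF r5 r15]
    eqC[OF r3 r27]
    eqC[OF r3 r17]
    eqC[OF r3 r5]
    eqC[OF r3 r13]
    eqC[OF r3 r25]
    eqC[OF r3 r15]
    eqC[OF r13 r27]
    eqC[OF r13 r17]
    eqC[OF r13 r5]
    eqC[OF r13 r3]
    eqC[OF r13 r25]
    eqC[OF r13 r15]
    eqC[OF r25 r27]
    eqC[OF r25 r17]
    eqC[OF r25 r5]
    eqC[OF r25 r3]
    eqC[OF r25 r13]
    eqC[OF r25 r15]
    eqC[OF r15 r27]
    eqC[OF r15 r17]
    eqC[OF r15 r5]
    eqC[OF r15 r3]
    eqC[OF r15 r13]
    eqC[OF r15 r25]
    by satx
qed




definition pc :: "(nat \<Rightarrow> nat) \<Rightarrow> nat \<Rightarrow> bool" where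
  "pc F g \<longleftrightarrow> (F 0 = g \<and> F 3 = g \<and> F 1 = F 2 \<and> F 1 = F 4 \<and> F 1 = F 5 \<and> F 1 \<noteq> g)
    \<or> (F 1 = g \<and> F 4 = g \<and> F 2 = F 3 \<and> F 2 = F 5 \<and> F 2 = F 0 \<and> F 2 \<noteq> g)
    \<or> (F 2 = g \<and> F 5 = g \<and> F 3 = F 4 \<and> F 3 = F 0 \<and> F 3 = F 1 \<and> F 3 \<noteq> g)"

definition pb :: "(nat \<Rightarrow> nat) \<Rightarrow> nat \<Rightarrow> bool" where
  "pb F g \<longleftrightarrow> (F 2 = g \<and> F 3 = g \<and> F 4 = g \<and> F 5 = g)
    \<or> (F 3 = g \<and> F 4 = g \<and> F 5 = g \<and> F 0 = g)
    \<or> (F 4 = g \<and> F 5 = g \<and> F 0 = g \<and> F 1 = g)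
    \<or> (F 5 = g \<and> F 0 = g \<and> F 1 = g \<and> F 2 = g)
    \<or> (F 0 = g \<and> F 1 = g \<and> F 2 = g \<and> F 3 = g)
    \<or> (F 1 = g \<and> F 2 = g \<and> F 3 = g \<and> F 4 = g)"

definition LF :: "(int \<Rightarrow> int \<Rightarrow> nat) \<Rightarrow> nat \<Rightarrow> nat" where
  "LF h k = (if k = 0 then h 2 0 else if k = 1 then h 0 2 else if k = 2 then h (-2) 2
     else if k = 3 then h (-2) 0 else if k = 4 then h 0 (-2) else h 2 (-2))"

lemma LF_simps: "LF h 0 = h 2 0" "LF h 1 = h 0 2" "LF h 2 = h (-2) 2"
  "LF h 3 = h (-2) 0" "LF h 4 = h 0 (-2)" "LF h 5 = h 2 (-2)"
  by (simp_all add: LF_def)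

lemma pcpb_of_explicit:
  fixes h :: "int \<Rightarrow> int \<Rightarrow> nat"
  shows "(h 2 0 = h 0 0 \<and> h (- 2) 0 = h 0 0 \<and> h 0 2 = h (- 2) 2 \<and> h 0 2 = h 0 (- 2) \<and> h 0 2 = h 2 (- 2) \<and> h 0 2 \<noteq> h 0 0) \<or> (h 0 2 = h 0 0 \<and> h 0 (- 2) = h 0 0 \<and> h (- 2) 2 = h (- 2) 0 \<and> h (- 2) 2 = h 2 (- 2) \<and> h (- 2) 2 = h 2 0 \<and> h (- 2) 2 \<noteq> h 0 0) \<or> (h (- 2) 2 = h 0 0 \<and> h 2 (- 2) = h 0 0 \<and> h (- 2) 0 = h 0 (- 2) \<and> h (- 2) 0 = h 2 0 \<and> h (- 2) 0 = h 0 2 \<and> h (- 2) 0 \<noteq> h 0 0) \<or> (h (- 2) 2 = h 0 0 \<and> h (- 2) 0 = h 0 0 \<and> h 0 (- 2) = h 0 0 \<and> h 2 (- 2) = h 0 0) \<or> (h 2 0 = h 0 0 \<and> h (- 2) 0 = h 0 0 \<and> h 0 (- 2) = h 0 0 \<and> h 2 (- 2) = h 0 0) \<or> (h 2 0 = h 0 0 \<and> h 0 2 = h 0 0 \<and> h 0 (- 2) = h 0 0 \<and> h 2 (- 2) = h 0 0) \<or> (h 2 0 = h 0 0 \<and> h 0 2 = h 0 0 \<and> h (- 2) 2 = h 0 0 \<and> h 2 (- 2) = h 0 0) \<or> (h 2 0 = h 0 0 \<and> h 0 2 = h 0 0 \<and> h (- 2) 2 = h 0 0 \<and> h (- 2)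 0 = h 0 0) \<or> (h 0 2 = h 0 0 \<and> h (- 2) 2 = h 0 0 \<and> h (- 2) 0 = h 0 0 \<and> h 0 (- 2) = h 0 0) \<Longrightarrow> pc (LF h) (h 0 0) \<or> pb (LF h) (h 0 0)"
  unfolding pc_def pb_def LF_simps by satx

lemma J_pcpb:
  fixes h :: "int \<Rightarrow> int \<Rightarrow> nat"
  assumes R: "\<And>a b. norm2 a b \<le> 7 \<Longrightarrow> h a b < 4"
    and E: "\<And>a b c d. norm2 a b \<le> 7 \<Longrightarrow> norm2 c d \<le> 7 \<Longrightarrow> norm2 (a-c) (b-d) = 1 \<Longrightarrow> h a b \<noteq> h c d"
    and T1: "\<And>a b. norm2 a b \<le> 3 \<Longrightarrow> \<not>(h (a+1) b = h (a-1) (b+1) \<and> h (a-1) (b+1) = h a (b-1))"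
    and T2: "\<And>a b. norm2 a b \<le> 3 \<Longrightarrow> \<not>(h a (b+1) = h (a-1) b \<and> h (a-1) b = h (a+1) (b-1))"
  shows "pc (LF h) (h 0 0) \<or> pb (LF h) (h 0 0)"
  by (rule pcpb_of_explicit[OF J_explicit[OF R E T1 T2]])

lemma less6: "(k::nat) < 6 \<Longrightarrow> k = 0 \<or> k = 1 \<or> k = 2 \<or> k = 3 \<or> k = 4 \<or> k = 5" by arith
lemma less3: "(k::nat) < 3 \<Longrightarrow> k = 0 \<or> k = 1 \<or> k = 2" by arith
lemma all6: "(\<forall>j<(6::nat). Q j) = (Q 0 \<and> Q 1 \<and> Q 2 \<and> Q 3 \<and> Q 4 \<and> Q 5)"
proof
  assume "\<forall>j<6. Q j" thus "Q 0 \<and> Q 1 \<and> Q 2 \<and> Q 3 \<and> Q 4 \<and> Q 5" by simp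
next
  assume "Q 0 \<and> Q 1 \<and> Q 2 \<and> Q 3 \<and> Q 4 \<and> Q 5" thus "\<forall>j<6. Q j" by (auto dest!: less6)
qed
lemma all3: "(\<forall>j<(3::nat). Q j) = (Q 0 \<and> Q 1 \<and> Q 2)"
proof
  assume "\<forall>j<3. Q j" thus "Q 0 \<and> Q 1 \<and> Q 2" by simp
next
  assume "Q 0 \<and> Q 1 \<and> Q 2" thus "\<forall>j<3. Q j" by (auto dest!: less3)
qed

lemma combine:
  assumes A: "pc F g \<or> pb F g" and B: "pc G g \<or> pb G g" and C: "\<And>k. k < 6 \<Longrightarrow> F k \<noteq> G k"
  shows "pc F g \<and> pc G g"
proof -
  have x: "\<not>(F 0 = g \<and> G 0 = g)" "\<not>(F 1 = g \<and> G 1 = g)" "\<not>(F 2 = g \<and> G 2 = g)"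
    "\<not>(F 3 = g \<and> G 3 = g)" "\<not>(F 4 = g \<and> G 4 = g)" "\<not>(F 5 = g \<and> G 5 = g)"
    using C[of 0] C[of 1] C[of 2] C[of 3] C[of 4] C[of 5] by auto
  have cF: "pc F g \<Longrightarrow> (F 0 = g \<and> F 3 = g) \<or> (F 1 = g \<and> F 4 = g) \<or> (F 2 = g \<and> F 5 = g)"
    unfolding pc_def by blast
  have cG: "pc G g \<Longrightarrow> (G 0 = g \<and> G 3 = g) \<or> (G 1 = g \<and> G 4 = g) \<or> (G 2 = g \<and> G 5 = g)"
    unfolding pc_def by blast
  have bF: "pb F g \<Longrightarrow> (F 0 = g \<or> F 3 = g) \<and> (F 1 = g \<or> F 4 = g) \<and> (F 2 = g \<or> F 5 = g)"
    unfolding pb_def by blast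
  have bG: "pb G g \<Longrightarrow> (G 0 = g \<or> G 3 = g) \<and> (G 1 = g \<or> G 4 = g) \<and> (G 2 = g \<or> G 5 = g)"
    unfolding pb_def by blast
  have bb: "pb F g \<Longrightarrow> pb G g \<Longrightarrow> False"
    using x unfolding pb_def by satx
  show ?thesis using A B x cF cG bF bG bb by satx
qed

lemma pc_cong: "(\<And>k. k < 6 \<Longrightarrow> F k = G k) \<Longrightarrow> pc F g = pc G g"
proof -
  assume a: "\<And>k. k < 6 \<Longrightarrow> F k = G k"
  have "F 0 = G 0" "F 1 = G 1" "F 2 = G 2" "F 3 = G 3" "F 4 = G 4" "F 5 = G 5"
    using a by simp_all
  thus ?thesis unfolding pc_def by simp
qed

lemma pc_opt:
  assumes "pc F g"
  shows "\<exists>k<6. F k = g \<and> F (k + 3) = g \<and> (\<exists>\<delta>. \<delta> \<noteq> g \<and> (\<forall>j<6. j mod 3 \<noteq> k mod 3 \<longrightarrow> F j = \<delta>))"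
  using assms unfolding pc_def
proof (elim disjE)
  assume h: "F 0 = g \<and> F 3 = g \<and> F 1 = F 2 \<and> F 1 = F 4 \<and> F 1 = F 5 \<and> F 1 \<noteq> g"
  have a: "F 0 = g" "F 3 = g" "F 1 \<noteq> g" "F 2 = F 1" "F 4 = F 1" "F 5 = F 1" using h by metis+
  show ?thesis
    by (rule exI[of _ 0]) (use a in \<open>simp add: all6\<close>)
next
  assume h: "F 1 = g \<and> F 4 = g \<and> F 2 = F 3 \<and> F 2 = F 5 \<and> F 2 = F 0 \<and> F 2 \<noteq> g"
  have a: "F 1 = g" "F 4 = g" "F 2 \<noteq> g" "F 3 = F 2" "F 5 = F 2" "F 0 = F 2" using h by metis+
  show ?thesis
    by (rule exI[of _ 1]) (use a in \<open>simp add: all6\<close>)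
next
  assume h: "F 2 = g \<and> F 5 = g \<and> F 3 = F 4 \<and> F 3 = F 0 \<and> F 3 = F 1 \<and> F 3 \<noteq> g"
  have a: "F 2 = g" "F 5 = g" "F 3 \<noteq> g" "F 4 = F 3" "F 0 = F 3" "F 1 = F 3" using h by metis+
  show ?thesis
    by (rule exI[of _ 2]) (use a in \<open>simp add: all6\<close>)
qed

lemma pc_diag: "pc F g \<Longrightarrow> \<forall>k<3. F k = F (k + 3)"
  unfolding pc_def all3 by auto

lemma Suc0_simps: "LF h (Suc 0) = h 0 2" "Lk (Suc 0) = P 0 2"
  using LF_simps(2) Lk_P(2) by simp_all

lemma LF_Lk: "k < 6 \<Longrightarrow> LF (\<lambda>a b. f (g (P a b))) k = f (g (Lk k))"
  by (drule less6, elim disjE) (simp_all add: LF_simps Lk_P Suc0_simps)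

lemma LVJ: "k < 6 \<Longrightarrow> Lk k \<in> VJ"
  by (drule less6, elim disjE) (simp_all add: Lk_P Suc0_simps P_VJ norm2_def)




theorem mainTheorem4:
  fixes f :: "complex \<Rightarrow> nat"
  assumes "proper_4_colouring VK f"
    and "\<forall>S\<in>Hcopies. \<not> has_mono_triple f S"
  shows "option_c f id \<and> option_c f Rot \<and>
         (\<forall>k<3. f (Lk k) = f (Lk (k + 3)) \<and> f (Rot (Lk k)) = f (Rot (Lk (k + 3))))"
proof -
  have fK: "\<And>z. z \<in> VK \<Longrightarrow> f z < 4" using assms(1) unfolding proper_4_colouring_def by blast
  have fE: "\<And>z w. z \<in> VK \<Longrightarrow> w \<in> VK \<Longrightarrow> cmod (z - w) = 1 \<Longrightarrow> f z \<noteq> f w"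
    using assms(1) unfolding proper_4_colouring_def by blast
  have VK1: "\<And>z. z \<in> VJ \<Longrightarrow> z \<in> VK" and VK2: "\<And>z. z \<in> VJ \<Longrightarrow> Rot z \<in> VK"
    by (auto simp: VK_def)
  have H1: "\<And>c. c \<in> centres \<Longrightarrow> \<not> has_mono_triple f (Hverts c)"
    using assms(2) by (auto simp: Hcopies_def)
  have H2: "\<And>c. c \<in> centres \<Longrightarrow> \<not> has_mono_triple f (Rot ` Hverts c)"
    using assms(2) by (auto simp: Hcopies_def)
  define h1 where "h1 = (\<lambda>a b. f (id (P a b)))"
  define h2 where "h2 = (\<lambda>a b. f (Rot (P a b)))"
  have J1: "pc (LF h1) (h1 0 0) \<or> pb (LF h1) (h1 0 0)"
  proof (rule J_pcpb)
    show "\<And>a b. norm2 a b \<le> 7 \<Longrightarrow> h1 a b < 4" unfolding h1_def by (simp add: fK VK1 P_VJ)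
    show "\<And>a b c d. norm2 a b \<le> 7 \<Longrightarrow> norm2 c d \<le> 7 \<Longrightarrow> norm2 (a-c) (b-d) = 1 \<Longrightarrow> h1 a b \<noteq> h1 c d"
      unfolding h1_def by (simp add: fE VK1 P_VJ P_dist1)
    show "\<And>a b. norm2 a b \<le> 3 \<Longrightarrow> \<not>(h1 (a+1) b = h1 (a-1) (b+1) \<and> h1 (a-1) (b+1) = h1 a (b-1))"
      unfolding h1_def id_def
      by (rule tri_lemma[OF H1[OF P_centres]], assumption, (rule Hv_P)+, (auto dest: P_inj)[3])
    show "\<And>a b. norm2 a b \<le> 3 \<Longrightarrow> \<not>(h1 a (b+1) = h1 (a-1) b \<and> h1 (a-1) b = h1 (a+1) (b-1))"
      unfolding h1_def id_def
      by (rule tri_lemma[OF H1[OF P_centres]], assumption, (rule Hv_P)+, (auto dest: P_inj)[3])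
  qed
  have J2: "pc (LF h2) (h2 0 0) \<or> pb (LF h2) (h2 0 0)"
  proof (rule J_pcpb)
    show "\<And>a b. norm2 a b \<le> 7 \<Longrightarrow> h2 a b < 4" unfolding h2_def by (simp add: fK VK2 P_VJ)
    show "\<And>a b c d. norm2 a b \<le> 7 \<Longrightarrow> norm2 c d \<le> 7 \<Longrightarrow> norm2 (a-c) (b-d) = 1 \<Longrightarrow> h2 a b \<noteq> h2 c d"
      unfolding h2_def by (simp add: fE VK2 P_VJ P_dist1 Rot_dist)
    show "\<And>a b. norm2 a b \<le> 3 \<Longrightarrow> \<not>(h2 (a+1) b = h2 (a-1) (b+1) \<and> h2 (a-1) (b+1) = h2 a (b-1))"
      unfolding h2_def
      by (rule tri_lemma[OF H2[OF P_centres]], assumption, (rule imageI, rule Hv_P)+, (auto dest!: P_inj Rot_inj)[3])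
    show "\<And>a b. norm2 a b \<le> 3 \<Longrightarrow> \<not>(h2 a (b+1) = h2 (a-1) b \<and> h2 (a-1) b = h2 (a+1) (b-1))"
      unfolding h2_def
      by (rule tri_lemma[OF H2[OF P_centres]], assumption, (rule imageI, rule Hv_P)+, (auto dest!: P_inj Rot_inj)[3])
  qed
  have g1: "h1 0 0 = f 0" "h2 0 0 = f 0" by (simp_all add: h1_def h2_def P00 Rot0)
  have L1: "\<And>k. k < 6 \<Longrightarrow> LF h1 k = f (id (Lk k))" unfolding h1_def by (rule LF_Lk)
  have L2: "\<And>k. k < 6 \<Longrightarrow> LF h2 k = f (Rot (Lk k))" unfolding h2_def by (rule LF_Lk)
  have cr: "\<And>k. k < 6 \<Longrightarrow> LF h1 k \<noteq> LF h2 k"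
    by (simp add: L1 L2 fE VK1 VK2 LVJ cross)
  have J1': "pc (LF h1) (f 0) \<or> pb (LF h1) (f 0)" using J1 g1 by simp
  have J2': "pc (LF h2) (f 0) \<or> pb (LF h2) (f 0)" using J2 g1 by simp
  have both: "pc (LF h1) (f 0) \<and> pc (LF h2) (f 0)"
    by (rule combine[OF J1' J2' cr])
  have p1: "pc (\<lambda>k. f (id (Lk k))) (f 0)"
    using both pc_cong[of "LF h1" "\<lambda>k. f (id (Lk k))" "f 0"] L1 by simp
  have p2: "pc (\<lambda>k. f (Rot (Lk k))) (f 0)"
    using both pc_cong[of "LF h2" "\<lambda>k. f (Rot (Lk k))" "f 0"] L2 by simp
  have o1: "option_c f id" unfolding option_c_def by (rule pc_opt[OF p1])
  have o2: "option_c f Rot" unfolding option_c_def by (rule pc_opt[OF p2])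
  have d1: "\<forall>k<3. f (id (Lk k)) = f (id (Lk (k + 3)))" by (rule pc_diag[OF p1])
  have d2: "\<forall>k<3. f (Rot (Lk k)) = f (Rot (Lk (k + 3)))" by (rule pc_diag[OF p2])
  show ?thesis using o1 o2 d1 d2 by simp
qed


end
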